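(* Let $(\mathbf{H},m,\Delta)$ be a commutative and cocommutative set Hopf monoid, and equip each $\mathbf{H}[I]$ with the reassembly partial order $\le_r$. Then $\mathbf{H}$ is a poset Hopf monoid with respect to these orders, and it is self-adjoint with $\Delta\dashv m$, i.e. for every decomposition $I=S\sqcup T$ and all $x\in\mathbf{H}[I]$, $y\in\mathbf{H}[S]$, $z\in\mathbf{H}[T]$: $\Delta_{S,T}(x)\le_r(y,z)$ (product order) if and only if $x\le_r m_{S,T}(y,z)$.
   Context: A (connected) set species $\mathbf{H}$ assigns to each finite set $I$ a finite set $\mathbf{H}[I]$, with $\mathbf{H}[\emptyset]=\{1\}$, and to each bijection $f:I\to J$ a bijection $\mathbf{H}[f]$, functorially. A set Hopf monoid $(\mathbf{H},m,\Delta)$ has maps $m_{S,T}:\mathbf{H}[S]\times\mathbf{H}[T]\to\mathbf{H}[S\sqcup T]$ (natural in bijections, associative, with unit $1$) and $\Delta_{S,T}:\mathbf{H}[S\sqcup T]\to\mathbf{H}[S]\times\mathbf{H}[T]$ (natural, coassociative, counital: $\Delta_{I,\emptyset}(x)=(x,1)$, $\Delta_{\emptyset,I}(x)=(1,x)$), satisfying compatibility: for $I=S_1\sqcup S_2=T_1\sqcup T_2$, $A=S_1\cap T_1$, $B=S_1\cap T_2$, $C=S_2\cap T_1$, $D=S_2\cap T_2$, if $\Delta_{A,B}(x)=(x_A,x_B)$, $\Delta_{C,D}(y)=(y_C,y_D)$ then $\Delta_{T_1,T_2}(m_{S_1,S_2}(x,y))=(m_{A,C}(x_A,y_C),m_{B,D}(x_B,y_D))$.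 Iterated maps $m_{S_1,\dots,S_k}$, $\Delta_{S_1,\dots,S_k}$ are defined by (co)associativity. It is commutative if $m_{S,T}(x,y)=m_{T,S}(y,x)$ and cocommutative if $\Delta_{S,T}(x)=(y,z)\iff\Delta_{T,S}(x)=(z,y)$. The reassembly relation: $x\le_r y$ for $x,y\in\mathbf{H}[I]$ iff $y=m_{S_1,\dots,S_k}\circ\Delta_{S_1,\dots,S_k}(x)$ for some set partition $S_1\sqcup\dots\sqcup S_k=I$; for commutative and cocommutative $\mathbf{H}$ this is a partial order (Marberg). A poset Hopf monoid is a set Hopf monoid together with partial orders on each $\mathbf{H}[I]$ such that all relabelling maps $\mathbf{H}[f]$, all $m_{S,T}$ and all $\Delta_{S,T}$ are order-preserving (product orders on products). It is self-adjoint if the monoid $(\mathbf{H},m)$ and comonoid $(\mathbf{H},\Delta)$ form an adjoint pair, i.e. $m_{S,T}$ and $\Delta_{S,T}$ form a Galois connection for all $S,T$. *)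

theory Defs
  imports Main
begin

text \<open>
A connected set species over the label type 'a: to every finite set I :: 'a set
we assign the finite set  H I :: 'h set ; relabelling along a bijection
f : I \<rightarrow> f ` I  is  rel f I :: 'h \<Rightarrow> 'h .
Product  m S T x y , coproduct  cop S T x  (a pair).
\<close>

definition set_species ::
  "('a set \<Rightarrow> 'h set) \<Rightarrow> (('a \<Rightarrow> 'a) \<Rightarrow> 'a set \<Rightarrow> 'h \<Rightarrow> 'h) \<Rightarrow> 'h \<Rightarrow> bool" where
  "set_species H rel one \<longleftrightarrow>
     H {} = {one} \<and>
     (\<forall>I. finite I \<longrightarrow> finite (H I)) \<and>
     (\<forall>I f g. finite I \<longrightarrow> inj_on f I \<longrightarrow> (\<forall>i\<in>I. f i = g i) \<longrightarrow>
        (\<forall>x\<in>H I. rel f I x = rel g I x)) \<and>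
     (\<forall>I. finite I \<longrightarrow> (\<forall>x\<in>H I. rel id I x = x)) \<and>
     (\<forall>I f. finite I \<longrightarrow> inj_on f I \<longrightarrow> bij_betw (rel f I) (H I) (H (f ` I))) \<and>
     (\<forall>I f g. finite I \<longrightarrow> inj_on f I \<longrightarrow> inj_on g (f ` I) \<longrightarrow>
        (\<forall>x\<in>H I. rel (g \<circ> f) I x = rel g (f ` I) (rel f I x)))"

definition set_hopf_monoid ::
  "('a set \<Rightarrow> 'h set) \<Rightarrow> (('a \<Rightarrow> 'a) \<Rightarrow> 'a set \<Rightarrow> 'h \<Rightarrow> 'h) \<Rightarrow> 'h
   \<Rightarrow> ('a set \<Rightarrow> 'a set \<Rightarrow> 'h \<Rightarrow> 'h \<Rightarrow> 'h)
   \<Rightarrow> ('a set \<Rightarrow> 'a set \<Rightarrow> 'h \<Rightarrow> 'h \<times> 'h) \<Rightarrow> bool" where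
  "set_hopf_monoid H rel one m cop \<longleftrightarrow>
     set_species H rel one \<and>
     \<comment> \<open>well-typedness\<close>
     (\<forall>S T. finite S \<longrightarrow> finite T \<longrightarrow> S \<inter> T = {} \<longrightarrow>
        (\<forall>x\<in>H S. \<forall>y\<in>H T. m S T x y \<in> H (S \<union> T))) \<and>
     (\<forall>S T. finite S \<longrightarrow> finite T \<longrightarrow> S \<inter> T = {} \<longrightarrow>
        (\<forall>x\<in>H (S \<union> T). cop S T x \<in> H S \<times> H T)) \<and>
     \<comment> \<open>naturality\<close>
     (\<forall>S T f. finite S \<longrightarrow> finite T \<longrightarrow> S \<inter> T = {} \<longrightarrow> inj_on f (S \<union> T) \<longrightarrow>
        (\<forall>x\<in>H S. \<forall>y\<in>H T.
           m (f ` S) (f ` T) (rel f S x) (rel f T y) = rel f (S \<union> T) (m S T x y))) \<and>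
     (\<forall>S T f. finite S \<longrightarrow> finite T \<longrightarrow> S \<inter> T = {} \<longrightarrow> inj_on f (S \<union> T) \<longrightarrow>
        (\<forall>x\<in>H (S \<union> T).
           cop (f ` S) (f ` T) (rel f (S \<union> T) x) = map_prod (rel f S) (rel f T) (cop S T x))) \<and>
     \<comment> \<open>associativity and unit\<close>
     (\<forall>R S T. finite R \<longrightarrow> finite S \<longrightarrow> finite T \<longrightarrow>
        R \<inter> S = {} \<longrightarrow> R \<inter> T = {} \<longrightarrow> S \<inter> T = {} \<longrightarrow>
        (\<forall>x\<in>H R. \<forall>y\<in>H S. \<forall>z\<in>H T.
           m (R \<union> S) T (m R S x y) z = m R (S \<union> T) x (m S T y z))) \<and>
     (\<forall>I. finite I \<longrightarrow> (\<forall>x\<in>H I. m {} I one x = x \<and> m I {} x one = x)) \<and>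
     \<comment> \<open>coassociativity and counit\<close>
     (\<forall>R S T. finite R \<longrightarrow> finite S \<longrightarrow> finite T \<longrightarrow>
        R \<inter> S = {} \<longrightarrow> R \<inter> T = {} \<longrightarrow> S \<inter> T = {} \<longrightarrow>
        (\<forall>x\<in>H (R \<union> S \<union> T).
           (let (a, b) = cop (R \<union> S) T x; (c, d) = cop R (S \<union> T) x
            in fst (cop R S a) = c \<and> snd (cop R S a) = fst (cop S T d) \<and> b = snd (cop S T d)))) \<and>
     (\<forall>I. finite I \<longrightarrow> (\<forall>x\<in>H I. cop I {} x = (x, one) \<and> cop {} I x = (one, x))) \<and>
     \<comment> \<open>compatibility\<close>
     (\<forall>S1 S2 T1 T2. finite S1 \<longrightarrow> finite S2 \<longrightarrow> S1 \<inter> S2 = {} \<longrightarrow>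
        T1 \<inter> T2 = {} \<longrightarrow> T1 \<union> T2 = S1 \<union> S2 \<longrightarrow>
        (\<forall>x\<in>H S1. \<forall>y\<in>H S2.
           (let A = S1 \<inter> T1; B = S1 \<inter> T2; C = S2 \<inter> T1; D = S2 \<inter> T2;
                (xA, xB) = cop A B x; (yC, yD) = cop C D y
            in cop T1 T2 (m S1 S2 x y) = (m A C xA yC, m B D xB yD))))"

definition commutative_hm :: "('a set \<Rightarrow> 'h set) \<Rightarrow> ('a set \<Rightarrow> 'a set \<Rightarrow> 'h \<Rightarrow> 'h \<Rightarrow> 'h) \<Rightarrow> bool" where
  "commutative_hm H m \<longleftrightarrow>
     (\<forall>S T. finite S \<longrightarrow> finite T \<longrightarrow> S \<inter> T = {} \<longrightarrow>
        (\<forall>x\<in>H S. \<forall>y\<in>H T. m S T x y = m T S y x))"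

definition cocommutative_hm :: "('a set \<Rightarrow> 'h set) \<Rightarrow> ('a set \<Rightarrow> 'a set \<Rightarrow> 'h \<Rightarrow> 'h \<times> 'h) \<Rightarrow> bool" where
  "cocommutative_hm H cop \<longleftrightarrow>
     (\<forall>S T. finite S \<longrightarrow> finite T \<longrightarrow> S \<inter> T = {} \<longrightarrow>
        (\<forall>x\<in>H (S \<union> T). cop T S x = prod.swap (cop S T x)))"

text \<open>Iterated  m_{S1,...,Sk} \<circ> \<Delta>_{S1,...,Sk}  (right-nested bracketing).\<close>
fun reassemble ::
  "('a set \<Rightarrow> 'a set \<Rightarrow> 'h \<Rightarrow> 'h \<Rightarrow> 'h) \<Rightarrow> ('a set \<Rightarrow> 'a set \<Rightarrow> 'h \<Rightarrow> 'h \<times> 'h)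
   \<Rightarrow> 'a set list \<Rightarrow> 'h \<Rightarrow> 'h" where
  "reassemble m cop [] x = x"
| "reassemble m cop [S] x = x"
| "reassemble m cop (S # S' # Ss) x =
     (let R = \<Union> (set (S' # Ss)); (a, b) = cop S R x
      in m S R a (reassemble m cop (S' # Ss) b))"

definition is_set_partition :: "'a set \<Rightarrow> 'a set list \<Rightarrow> bool" where
  "is_set_partition I Ss \<longleftrightarrow>
     \<Union> (set Ss) = I \<and> (\<forall>S\<in>set Ss. S \<noteq> {}) \<and>
     (\<forall>i<length Ss. \<forall>j<length Ss. i \<noteq> j \<longrightarrow> Ss ! i \<inter> Ss ! j = {})"

definition reassembly_le ::
  "('a set \<Rightarrow> 'h set) \<Rightarrow> ('a set \<Rightarrow> 'a set \<Rightarrow> 'h \<Rightarrow> 'h \<Rightarrow> 'h) \<Rightarrow> ('a set \<Rightarrow> 'a set \<Rightarrow> 'h \<Rightarrow> 'h \<times> 'h)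
   \<Rightarrow> 'a set \<Rightarrow> 'h \<Rightarrow> 'h \<Rightarrow> bool" where
  "reassembly_le H m cop I x y \<longleftrightarrow>
     x \<in> H I \<and> y \<in> H I \<and> (\<exists>Ss. is_set_partition I Ss \<and> y = reassemble m cop Ss x)"

definition poset_hopf_monoid ::
  "('a set \<Rightarrow> 'h set) \<Rightarrow> (('a \<Rightarrow> 'a) \<Rightarrow> 'a set \<Rightarrow> 'h \<Rightarrow> 'h) \<Rightarrow> 'h
   \<Rightarrow> ('a set \<Rightarrow> 'a set \<Rightarrow> 'h \<Rightarrow> 'h \<Rightarrow> 'h)
   \<Rightarrow> ('a set \<Rightarrow> 'a set \<Rightarrow> 'h \<Rightarrow> 'h \<times> 'h) \<Rightarrow> ('a set \<Rightarrow> 'h \<Rightarrow> 'h \<Rightarrow> bool) \<Rightarrow> bool" where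
  "poset_hopf_monoid H rel one m cop le \<longleftrightarrow>
     set_hopf_monoid H rel one m cop \<and>
     (\<forall>I. finite I \<longrightarrow> partial_order_on (H I) {(x, y). x \<in> H I \<and> y \<in> H I \<and> le I x y}) \<and>
     (\<forall>I f. finite I \<longrightarrow> inj_on f I \<longrightarrow>
        (\<forall>x\<in>H I. \<forall>x'\<in>H I. le I x x' \<longrightarrow> le (f ` I) (rel f I x) (rel f I x'))) \<and>
     (\<forall>S T. finite S \<longrightarrow> finite T \<longrightarrow> S \<inter> T = {} \<longrightarrow>
        (\<forall>x\<in>H S. \<forall>x'\<in>H S. \<forall>y\<in>H T. \<forall>y'\<in>H T. le S x x' \<longrightarrow> le T y y' \<longrightarrow>
           le (S \<union> T) (m S T x y) (m S T x' y'))) \<and>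
     (\<forall>S T. finite S \<longrightarrow> finite T \<longrightarrow> S \<inter> T = {} \<longrightarrow>
        (\<forall>x\<in>H (S \<union> T). \<forall>x'\<in>H (S \<union> T). le (S \<union> T) x x' \<longrightarrow>
           le S (fst (cop S T x)) (fst (cop S T x')) \<and> le T (snd (cop S T x)) (snd (cop S T x'))))"

end

theory Submission
  imports Defs "HOL-Library.Multiset"
begin

fun dj :: "'a set list \<Rightarrow> bool" where
  "dj [] = True"
| "dj (B # Bs) = (B \<inter> \<Union>(set Bs) = {} \<and> dj Bs)"

lemma dj_append: "dj (xs @ ys) = (dj xs \<and> dj ys \<and> \<Union>(set xs) \<inter> \<Union>(set ys) = {})"
  by (induction xs) auto

lemma dj_nth: "dj Ss = (\<forall>i<length Ss. \<forall>j<length Ss. i \<noteq> j \<longrightarrow> Ss ! i \<inter> Ss ! j = {})"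
proof (induction Ss)
  case Nil then show ?case by simp
next
  case (Cons B Bs)
  show ?case
  proof
    assume a: "dj (B # Bs)"
    then have a1: "B \<inter> \<Union>(set Bs) = {}" and a2: "dj Bs" by auto
    have a3: "\<forall>i<length Bs. \<forall>j<length Bs. i \<noteq> j \<longrightarrow> Bs ! i \<inter> Bs ! j = {}"
      using a2 Cons.IH by blast
    show "\<forall>i<length (B#Bs). \<forall>j<length (B#Bs). i \<noteq> j \<longrightarrow> (B#Bs) ! i \<inter> (B#Bs) ! j = {}"
    proof (intro allI impI)
      fix i j assume ij: "i < length (B#Bs)" "j < length (B#Bs)" "i \<noteq> j"
      show "(B#Bs) ! i \<inter> (B#Bs) ! j = {}"
      proof (cases i)
        case 0
        then obtain j' where j': "j = Suc j'" using ij by (cases j) auto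
        then have "Bs ! j' \<in> set Bs" using ij by simp
        then show ?thesis using 0 j' a1 by auto
      next
        case (Suc i')
        show ?thesis
        proof (cases j)
          case 0
          have "Bs ! i' \<in> set Bs" using ij Suc by simp
          then show ?thesis using 0 Suc a1 by auto
        next
          case (Suc j')
          then show ?thesis using \<open>i = Suc i'\<close> ij a3 by simp
        qed
      qed
    qed
  next
    assume a: "\<forall>i<length (B#Bs). \<forall>j<length (B#Bs). i \<noteq> j \<longrightarrow> (B#Bs) ! i \<inter> (B#Bs) ! j = {}"
    have "\<forall>i<length Bs. \<forall>j<length Bs. i \<noteq> j \<longrightarrow> Bs ! i \<inter> Bs ! j = {}"
    proof (intro allI impI)
      fix i j assume "i < length Bs" "j < length Bs" "i \<noteq> j"
      then show "Bs ! i \<inter> Bs ! j = {}" using a[rule_format, of "Suc i" "Suc j"] by simp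
    qed
    then have "dj Bs" using Cons.IH by blast
    moreover have "B \<inter> \<Union>(set Bs) = {}"
    proof -
      { fix C assume "C \<in> set Bs"
        then obtain k where "k < length Bs" "Bs ! k = C" by (auto simp: in_set_conv_nth)
        then have "B \<inter> C = {}" using a[rule_format, of 0 "Suc k"] by simp }
      then show ?thesis by blast
    qed
    ultimately show "dj (B # Bs)" by simp
  qed
qed

lemma partition_dj: "is_set_partition I Ss = (\<Union>(set Ss) = I \<and> (\<forall>S\<in>set Ss. S \<noteq> {}) \<and> dj Ss)"
  unfolding is_set_partition_def dj_nth by simp

locale shm =
  fixes H :: "'a set \<Rightarrow> 'h set"
    and rel :: "('a \<Rightarrow> 'a) \<Rightarrow> 'a set \<Rightarrow> 'h \<Rightarrow> 'h"
    and one :: 'h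
    and m :: "'a set \<Rightarrow> 'a set \<Rightarrow> 'h \<Rightarrow> 'h \<Rightarrow> 'h"
    and cop :: "'a set \<Rightarrow> 'a set \<Rightarrow> 'h \<Rightarrow> 'h \<times> 'h"
  assumes hm: "set_hopf_monoid H rel one m cop"
    and cm: "commutative_hm H m"
    and ccm: "cocommutative_hm H cop"
begin

lemmas hmc0 = hm[unfolded set_hopf_monoid_def]
lemmas hmc1 = hmc0[THEN conjunct1]
lemmas hmc2 = hmc0[THEN conjunct2, THEN conjunct1]
lemmas hmc3 = hmc0[THEN conjunct2, THEN conjunct2, THEN conjunct1]
lemmas hmc4 = hmc0[THEN conjunct2, THEN conjunct2, THEN conjunct2, THEN conjunct1]
lemmas hmc5 = hmc0[THEN conjunct2, THEN conjunct2, THEN conjunct2, THEN conjunct2, THEN conjunct1]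
lemmas hmc6 = hmc0[THEN conjunct2, THEN conjunct2, THEN conjunct2, THEN conjunct2, THEN conjunct2, THEN conjunct1]
lemmas hmc7 = hmc0[THEN conjunct2, THEN conjunct2, THEN conjunct2, THEN conjunct2, THEN conjunct2, THEN conjunct2, THEN conjunct1]
lemmas hmc8 = hmc0[THEN conjunct2, THEN conjunct2, THEN conjunct2, THEN conjunct2, THEN conjunct2, THEN conjunct2, THEN conjunct2, THEN conjunct1]
lemmas hmc9 = hmc0[THEN conjunct2, THEN conjunct2, THEN conjunct2, THEN conjunct2, THEN conjunct2, THEN conjunct2, THEN conjunct2, THEN conjunct2, THEN conjunct1]
lemmas hmc10 = hmc0[THEN conjunct2, THEN conjunct2, THEN conjunct2, THEN conjunct2, THEN conjunct2, THEN conjunct2, THEN conjunct2, THEN conjunct2, THEN conjunct2]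
lemmas spc0 = hmc1[unfolded set_species_def]
lemmas spc1 = spc0[THEN conjunct1]
lemmas spc2 = spc0[THEN conjunct2, THEN conjunct1]
lemmas spc3 = spc0[THEN conjunct2, THEN conjunct2, THEN conjunct1]
lemmas spc4 = spc0[THEN conjunct2, THEN conjunct2, THEN conjunct2, THEN conjunct1]
lemmas spc5 = spc0[THEN conjunct2, THEN conjunct2, THEN conjunct2, THEN conjunct2, THEN conjunct1]
lemmas spc6 = spc0[THEN conjunct2, THEN conjunct2, THEN conjunct2, THEN conjunct2, THEN conjunct2]

lemma H_empty: "H {} = {one}"
  by (rule spc1)

lemma m_in: "finite S \<Longrightarrow> finite T \<Longrightarrow> S \<inter> T = {} \<Longrightarrow> x \<in> H S \<Longrightarrow> y \<in> H T \<Longrightarrow> m S T x y \<in> H (S \<union> T)"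
  using hmc2[rule_format] by simp

lemma cop_in: "finite S \<Longrightarrow> finite T \<Longrightarrow> S \<inter> T = {} \<Longrightarrow> x \<in> H (S \<union> T) \<Longrightarrow> cop S T x \<in> H S \<times> H T"
  using hmc3[rule_format] by simp

lemma m_nat: "finite S \<Longrightarrow> finite T \<Longrightarrow> S \<inter> T = {} \<Longrightarrow> inj_on f (S \<union> T) \<Longrightarrow> x \<in> H S \<Longrightarrow> y \<in> H T \<Longrightarrow>
   m (f ` S) (f ` T) (rel f S x) (rel f T y) = rel f (S \<union> T) (m S T x y)"
  using hmc4[rule_format] by simp

lemma cop_nat: "finite S \<Longrightarrow> finite T \<Longrightarrow> S \<inter> T = {} \<Longrightarrow> inj_on f (S \<union> T) \<Longrightarrow> x \<in> H (S \<union> T) \<Longrightarrow>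
   cop (f ` S) (f ` T) (rel f (S \<union> T) x) = map_prod (rel f S) (rel f T) (cop S T x)"
  using hmc5[rule_format] by simp

lemma m_assoc: "finite R \<Longrightarrow> finite S \<Longrightarrow> finite T \<Longrightarrow> R \<inter> S = {} \<Longrightarrow> R \<inter> T = {} \<Longrightarrow> S \<inter> T = {} \<Longrightarrow>
   x \<in> H R \<Longrightarrow> y \<in> H S \<Longrightarrow> z \<in> H T \<Longrightarrow> m (R \<union> S) T (m R S x y) z = m R (S \<union> T) x (m S T y z)"
  using hmc6[rule_format] by simp

lemma m_unitl: "finite I \<Longrightarrow> x \<in> H I \<Longrightarrow> m {} I one x = x"
  using hmc7[rule_format] by simp

lemma m_unitr: "finite I \<Longrightarrow> x \<in> H I \<Longrightarrow> m I {} x one = x"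
  using hmc7[rule_format] by simp

lemma coassoc: "finite R \<Longrightarrow> finite S \<Longrightarrow> finite T \<Longrightarrow> R \<inter> S = {} \<Longrightarrow> R \<inter> T = {} \<Longrightarrow> S \<inter> T = {} \<Longrightarrow>
   x \<in> H (R \<union> S \<union> T) \<Longrightarrow> fst (cop R S (fst (cop (R \<union> S) T x))) = fst (cop R (S \<union> T) x)"
proof -
  assume a: "finite R" "finite S" "finite T" "R \<inter> S = {}" "R \<inter> T = {}" "S \<inter> T = {}" "x \<in> H (R \<union> S \<union> T)"
  show ?thesis using hmc8[rule_format, OF a] by (simp add: Let_def case_prod_beta)
qed

lemma cop_unit: "finite I \<Longrightarrow> x \<in> H I \<Longrightarrow> cop I {} x = (x, one)"
  using hmc9[rule_format] by simp

lemma compat: "finite S1 \<Longrightarrow> finite S2 \<Longrightarrow> S1 \<inter> S2 = {} \<Longrightarrow> T1 \<inter> T2 = {} \<Longrightarrow> T1 \<union> T2 = S1 \<union> S2 \<Longrightarrow>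
  x \<in> H S1 \<Longrightarrow> y \<in> H S2 \<Longrightarrow>
  fst (cop T1 T2 (m S1 S2 x y)) = m (S1 \<inter> T1) (S2 \<inter> T1) (fst (cop (S1 \<inter> T1) (S1 \<inter> T2) x)) (fst (cop (S2 \<inter> T1) (S2 \<inter> T2) y))"
proof -
  assume a: "finite S1" "finite S2" "S1 \<inter> S2 = {}" "T1 \<inter> T2 = {}" "T1 \<union> T2 = S1 \<union> S2" "x \<in> H S1" "y \<in> H S2"
  show ?thesis using hmc10[rule_format, OF a] by (simp add: Let_def case_prod_beta)
qed

lemma m_comm: "finite S \<Longrightarrow> finite T \<Longrightarrow> S \<inter> T = {} \<Longrightarrow> x \<in> H S \<Longrightarrow> y \<in> H T \<Longrightarrow> m S T x y = m T S y x"
  using cm unfolding commutative_hm_def by blast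

lemma cop_comm: "finite S \<Longrightarrow> finite T \<Longrightarrow> S \<inter> T = {} \<Longrightarrow> x \<in> H (S \<union> T) \<Longrightarrow> cop T S x = prod.swap (cop S T x)"
  using ccm unfolding cocommutative_hm_def by blast

lemma rel_bij: "finite I \<Longrightarrow> inj_on f I \<Longrightarrow> bij_betw (rel f I) (H I) (H (f ` I))"
  using spc5[rule_format] by simp


definition res :: "'a set \<Rightarrow> 'a set \<Rightarrow> 'h \<Rightarrow> 'h" where
  "res I A x = fst (cop A (I - A) x)"

lemma res_in: "finite I \<Longrightarrow> A \<subseteq> I \<Longrightarrow> x \<in> H I \<Longrightarrow> res I A x \<in> H A"
proof -
  assume a: "finite I" "A \<subseteq> I" "x \<in> H I"
  have e: "A \<union> (I - A) = I" using a by blast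
  have "cop A (I - A) x \<in> H A \<times> H (I - A)"
    using cop_in[of A "I - A" x] a e finite_subset by auto
  then show ?thesis unfolding res_def by auto
qed

lemma res_id: "finite I \<Longrightarrow> x \<in> H I \<Longrightarrow> res I I x = x"
  unfolding res_def by (simp add: cop_unit)

lemma res_empty: "finite I \<Longrightarrow> x \<in> H I \<Longrightarrow> res I {} x = one"
  using res_in[of I "{}" x] H_empty by auto

lemma res_res: "finite I \<Longrightarrow> A \<subseteq> B \<Longrightarrow> B \<subseteq> I \<Longrightarrow> x \<in> H I \<Longrightarrow> res B A (res I B x) = res I A x"
proof -
  assume a: "finite I" "A \<subseteq> B" "B \<subseteq> I" "x \<in> H I"
  have e1: "A \<union> (B - A) = B" using a by blast
  have e2: "(B - A) \<union> (I - B) = I - A" using a by blast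
  have e3: "A \<union> (B - A) \<union> (I - B) = I" using a by blast
  have fB: "finite B" using finite_subset[OF a(3) a(1)] .
  have fA: "finite A" "finite (B - A)" "finite (I - B)" using finite_subset[OF a(2) fB] fB a(1) by auto
  have d: "A \<inter> (B - A) = {}" "A \<inter> (I - B) = {}" "(B - A) \<inter> (I - B) = {}" using a by blast+
  have xin: "x \<in> H (A \<union> (B - A) \<union> (I - B))" unfolding e3 by (rule a(4))
  have "fst (cop A (B - A) (fst (cop (A \<union> (B - A)) (I - B) x))) = fst (cop A ((B - A) \<union> (I - B)) x)"
    by (rule coassoc[OF fA d xin])
  then show ?thesis unfolding res_def e1 e2 .
qed

lemma cop_res: "finite S \<Longrightarrow> finite T \<Longrightarrow> S \<inter> T = {} \<Longrightarrow> x \<in> H (S \<union> T) \<Longrightarrow>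
  cop S T x = (res (S \<union> T) S x, res (S \<union> T) T x)"
proof -
  assume a: "finite S" "finite T" "S \<inter> T = {}" "x \<in> H (S \<union> T)"
  have e1: "(S \<union> T) - S = T" using a by blast
  have e2: "(S \<union> T) - T = S" using a by blast
  have "cop T S x = prod.swap (cop S T x)" using cop_comm a by blast
  then have "snd (cop S T x) = fst (cop T S x)" by (cases "cop S T x") auto
  then show ?thesis unfolding res_def e1 e2 by (cases "cop S T x") auto
qed

lemma res_m: "finite S1 \<Longrightarrow> finite S2 \<Longrightarrow> S1 \<inter> S2 = {} \<Longrightarrow> T \<subseteq> S1 \<union> S2 \<Longrightarrow> x \<in> H S1 \<Longrightarrow> y \<in> H S2 \<Longrightarrow>
  res (S1 \<union> S2) T (m S1 S2 x y) = m (S1 \<inter> T) (S2 \<inter> T) (res S1 (S1 \<inter> T) x) (res S2 (S2 \<inter> T) y)"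
proof -
  assume a: "finite S1" "finite S2" "S1 \<inter> S2 = {}" "T \<subseteq> S1 \<union> S2" "x \<in> H S1" "y \<in> H S2"
  have e1: "S1 - S1 \<inter> T = S1 \<inter> ((S1 \<union> S2) - T)" by blast
  have e2: "S2 - S2 \<inter> T = S2 \<inter> ((S1 \<union> S2) - T)" by blast
  have "fst (cop T ((S1 \<union> S2) - T) (m S1 S2 x y)) = m (S1 \<inter> T) (S2 \<inter> T)
     (fst (cop (S1 \<inter> T) (S1 \<inter> ((S1 \<union> S2) - T)) x)) (fst (cop (S2 \<inter> T) (S2 \<inter> ((S1 \<union> S2) - T)) y))"
  proof (rule compat)
    show "T \<inter> ((S1 \<union> S2) - T) = {}" by blast
    show "T \<union> ((S1 \<union> S2) - T) = S1 \<union> S2" using a(4) by blast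
  qed (use a in auto)
  then show ?thesis unfolding res_def e1 e2 .
qed

fun P :: "('a set \<times> 'h) list \<Rightarrow> 'h" where
  "P [] = one"
| "P (p # ps) = m (fst p) (\<Union>(fst ` set ps)) (snd p) (P ps)"

abbreviation blk :: "('a set \<times> 'h) list \<Rightarrow> 'a set" where
  "blk ps \<equiv> \<Union>(fst ` set ps)"

definition wf :: "('a set \<times> 'h) list \<Rightarrow> bool" where
  "wf ps \<longleftrightarrow> dj (map fst ps) \<and> (\<forall>p\<in>set ps. finite (fst p) \<and> snd p \<in> H (fst p))"

lemma wf_Nil[simp]: "wf []" by (simp add: wf_def)

lemma wf_Cons: "wf (p # ps) = (fst p \<inter> blk ps = {} \<and> finite (fst p) \<and> snd p \<in> H (fst p) \<and> wf ps)"
  by (auto simp: wf_def)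

lemma wf_append: "wf (ps @ qs) = (wf ps \<and> wf qs \<and> blk ps \<inter> blk qs = {})"
  by (auto simp: wf_def dj_append)

lemma wf_move: "wf (qs1 @ p # qs2) = wf (p # qs1 @ qs2)"
  by (auto simp: wf_append wf_Cons)

lemma blk_finite: "wf ps \<Longrightarrow> finite (blk ps)"
  by (auto simp: wf_def)

lemma P_in: "wf ps \<Longrightarrow> P ps \<in> H (blk ps)"
proof (induction ps)
  case Nil then show ?case using H_empty by simp
next
  case (Cons p ps)
  then show ?case using m_in[of "fst p" "blk ps" "snd p" "P ps"] blk_finite
    by (auto simp: wf_Cons)
qed

lemma P_append: "wf (ps @ qs) \<Longrightarrow> P (ps @ qs) = m (blk ps) (blk qs) (P ps) (P qs)"
proof (induction ps)
  case Nil
  then show ?case using m_unitl[of "blk qs" "P qs"] P_in blk_finite by simp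
next
  case (Cons p ps)
  have w: "wf (ps @ qs)" "fst p \<inter> (blk ps \<union> blk qs) = {}" "finite (fst p)" "snd p \<in> H (fst p)"
    "wf ps" "wf qs" "blk ps \<inter> blk qs = {}"
    using Cons.prems by (auto simp: wf_Cons wf_append)
  have "P ((p # ps) @ qs) = m (fst p) (blk ps \<union> blk qs) (snd p) (P (ps @ qs))" by simp
  also have "\<dots> = m (fst p) (blk ps \<union> blk qs) (snd p) (m (blk ps) (blk qs) (P ps) (P qs))"
    using Cons.IH w by simp
  also have "\<dots> = m (fst p \<union> blk ps) (blk qs) (m (fst p) (blk ps) (snd p) (P ps)) (P qs)"
    by (rule m_assoc[symmetric, OF w(3) blk_finite[OF w(5)] blk_finite[OF w(6)] _ _ w(7) w(4) P_in[OF w(5)] P_in[OF w(6)]])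
       (use w(2) in blast)+
  finally show ?case by simp
qed

lemma P_empty_head: "wf (p # ps) \<Longrightarrow> fst p = {} \<Longrightarrow> P (p # ps) = P ps"
  using m_unitl[of "blk ps" "P ps"] P_in blk_finite H_empty by (auto simp: wf_Cons)

lemma P_all_empty: "wf ps \<Longrightarrow> \<forall>p\<in>set ps. fst p = {} \<Longrightarrow> P ps = one"
proof (induction ps)
  case Nil then show ?case by simp
next
  case (Cons p ps) then show ?case using P_empty_head[of p ps] by (auto simp: wf_Cons)
qed

lemma blk_filter: "blk (filter (\<lambda>p. fst p \<noteq> {}) ps) = blk ps"
  by auto

lemma P_filter: "wf ps \<Longrightarrow> P (filter (\<lambda>p. fst p \<noteq> {}) ps) = P ps"
proof (induction ps)
  case Nil then show ?case by simp
next
  case (Cons p ps)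
  show ?case
  proof (cases "fst p = {}")
    case True
    then show ?thesis using Cons P_empty_head[of p ps] by (auto simp: wf_Cons)
  next
    case False
    then have "P (filter (\<lambda>p. fst p \<noteq> {}) (p # ps)) = m (fst p) (blk ps) (snd p) (P (filter (\<lambda>p. fst p \<noteq> {}) ps))"
      using blk_filter[of ps] by simp
    then show ?thesis using Cons by (simp add: wf_Cons)
  qed
qed

lemma P_swap: "wf (p # q # ps) \<Longrightarrow> P (p # q # ps) = P (q # p # ps)"
proof -
  assume w0: "wf (p # q # ps)"
  define A where "A = fst p"
  define B where "B = fst q"
  define a where "a = snd p"
  define b where "b = snd q"
  define U where "U = blk ps"
  have w1: "fst p \<inter> (fst q \<union> blk ps) = {}" "finite (fst p)" "snd p \<in> H (fst p)"
     "fst q \<inter> blk ps = {}" "finite (fst q)" "snd q \<in> H (fst q)" "wf ps"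
    using w0 by (simp_all add: wf_Cons)
  have w: "finite A" "finite B" "finite U" "A \<inter> B = {}" "A \<inter> U = {}" "B \<inter> U = {}"
    "a \<in> H A" "b \<in> H B" "P ps \<in> H U"
    unfolding A_def B_def a_def b_def U_def using w1 blk_finite P_in by auto
  have "P (p # q # ps) = m A (B \<union> U) a (m B U b (P ps))"
    unfolding A_def B_def a_def b_def U_def by simp
  also have "\<dots> = m (A \<union> B) U (m A B a b) (P ps)"
    using w by (intro m_assoc[symmetric]) auto
  also have "\<dots> = m (B \<union> A) U (m B A b a) (P ps)"
    using w m_comm[of A B a b] by (simp add: Un_commute)
  also have "\<dots> = m B (A \<union> U) b (m A U a (P ps))"
    using w by (intro m_assoc) auto
  also have "\<dots> = P (q # p # ps)"
    unfolding A_def B_def a_def b_def U_def by simp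
  finally show ?thesis .
qed

lemma P_move: "wf (qs1 @ p # qs2) \<Longrightarrow> P (qs1 @ p # qs2) = P (p # qs1 @ qs2)"
proof (induction qs1)
  case Nil then show ?case by simp
next
  case (Cons q qs1)
  have w1: "wf (qs1 @ p # qs2)" using Cons.prems by (simp add: wf_Cons)
  have b: "blk (qs1 @ p # qs2) = blk (p # qs1 @ qs2)" by auto
  have "P ((q # qs1) @ p # qs2) = m (fst q) (blk (qs1 @ p # qs2)) (snd q) (P (qs1 @ p # qs2))" by simp
  also have "\<dots> = m (fst q) (blk (p # qs1 @ qs2)) (snd q) (P (p # qs1 @ qs2))"
    using Cons.IH w1 b by simp
  also have "\<dots> = P (q # p # qs1 @ qs2)" by simp
  also have "\<dots> = P (p # q # qs1 @ qs2)"
  proof (rule P_swap)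
    show "wf (q # p # qs1 @ qs2)" using Cons.prems wf_move[of "q # qs1" p qs2] wf_move[of "[q]" p "qs1 @ qs2"] by simp
  qed
  finally show ?case by simp
qed

lemma P_perm: "mset ps = mset qs \<Longrightarrow> wf ps \<Longrightarrow> wf qs \<Longrightarrow> P ps = P qs"
proof (induction ps arbitrary: qs)
  case Nil then have "qs = []" by simp
  then show ?case by simp
next
  case (Cons p ps)
  have "p \<in> set qs" using Cons.prems(1) by (metis list.set_intros(1) set_mset_mset)
  then obtain qs1 qs2 where qs: "qs = qs1 @ p # qs2" by (meson split_list)
  have ms: "mset ps = mset (qs1 @ qs2)" using Cons.prems(1) qs by simp
  have w2: "wf (p # qs1 @ qs2)" using Cons.prems(3) qs wf_move by simp
  have IH: "P ps = P (qs1 @ qs2)"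
    using Cons.IH[OF ms] Cons.prems(2) w2 by (simp add: wf_Cons)
  have bl: "blk ps = blk (qs1 @ qs2)" using ms by (metis set_mset_mset)
  have "P qs = P (p # qs1 @ qs2)" using qs Cons.prems(3) P_move by simp
  also have "\<dots> = P (p # ps)" using IH bl by simp
  finally show ?case by simp
qed
lemma dj_map_Int: "dj Ss \<Longrightarrow> dj (map (\<lambda>B. B \<inter> T) Ss)"
  by (induction Ss) auto

lemma dj_filter: "dj Ss \<Longrightarrow> dj (filter Q Ss)"
  by (induction Ss) auto

lemma dj_meet: "dj Ss \<Longrightarrow> dj Ts \<Longrightarrow> dj (concat (map (\<lambda>T. map (\<lambda>B. B \<inter> T) Ss) Ts))"
proof (induction Ts)
  case Nil then show ?case by simp
next
  case (Cons T Ts)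
  have "\<Union>(set (map (\<lambda>B. B \<inter> T) Ss)) \<subseteq> T" by auto
  moreover have "\<Union>(set (concat (map (\<lambda>T. map (\<lambda>B. B \<inter> T) Ss) Ts))) \<subseteq> \<Union>(set Ts)" by auto
  moreover have "T \<inter> \<Union>(set Ts) = {}" using Cons.prems by simp
  ultimately have "\<Union>(set (map (\<lambda>B. B \<inter> T) Ss)) \<inter> \<Union>(set (concat (map (\<lambda>T. map (\<lambda>B. B \<inter> T) Ss) Ts))) = {}"
    by blast
  then show ?case using Cons dj_map_Int[of Ss T] by (simp add: dj_append)
qed

lemma Un_meet: "\<Union>(set (concat (map (\<lambda>T. map (\<lambda>B. B \<inter> T) Ss) Ts))) = \<Union>(set Ss) \<inter> \<Union>(set Ts)"
  by auto

definition RA :: "'a set \<Rightarrow> 'a set list \<Rightarrow> 'h \<Rightarrow> 'h" where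
  "RA I Ss x = P (map (\<lambda>C. (C, res I C x)) Ss)"

lemma blk_map: "blk (map (\<lambda>C. (C, g C)) Ss) = \<Union>(set Ss)"
  by (simp add: image_image)

lemma wf_RA: "finite I \<Longrightarrow> dj Ss \<Longrightarrow> \<Union>(set Ss) \<subseteq> I \<Longrightarrow> x \<in> H I \<Longrightarrow> wf (map (\<lambda>C. (C, res I C x)) Ss)"
  unfolding wf_def by (auto simp: o_def intro: res_in finite_subset)

lemma RA_in: "finite I \<Longrightarrow> dj Ss \<Longrightarrow> \<Union>(set Ss) \<subseteq> I \<Longrightarrow> x \<in> H I \<Longrightarrow> RA I Ss x \<in> H (\<Union>(set Ss))"
  unfolding RA_def using P_in[OF wf_RA] blk_map by metis

lemma res_P: "wf ps \<Longrightarrow> B \<subseteq> blk ps \<Longrightarrow>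
   res (blk ps) B (P ps) = P (map (\<lambda>p. (fst p \<inter> B, res (fst p) (fst p \<inter> B) (snd p))) ps)"
proof (induction ps arbitrary: B)
  case Nil
  then have "B = {}" by simp
  then show ?case using res_id[of "{}" one] H_empty by simp
next
  case (Cons p ps)
  have w: "fst p \<inter> blk ps = {}" "finite (fst p)" "snd p \<in> H (fst p)" "wf ps"
    using Cons.prems(1) by (simp_all add: wf_Cons)
  have B: "B \<subseteq> fst p \<union> blk ps" using Cons.prems(2) by simp
  have "res (blk (p # ps)) B (P (p # ps)) = res (fst p \<union> blk ps) B (m (fst p) (blk ps) (snd p) (P ps))"
    by simp
  also have "\<dots> = m (fst p \<inter> B) (blk ps \<inter> B) (res (fst p) (fst p \<inter> B) (snd p)) (res (blk ps) (blk ps \<inter> B) (P ps))"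
    by (rule res_m[OF w(2) blk_finite[OF w(4)] w(1) B w(3) P_in[OF w(4)]])
  also have "res (blk ps) (blk ps \<inter> B) (P ps) =
      P (map (\<lambda>q. (fst q \<inter> (blk ps \<inter> B), res (fst q) (fst q \<inter> (blk ps \<inter> B)) (snd q))) ps)"
    using Cons.IH[OF w(4)] by simp
  also have "map (\<lambda>q. (fst q \<inter> (blk ps \<inter> B), res (fst q) (fst q \<inter> (blk ps \<inter> B)) (snd q))) ps =
      map (\<lambda>q. (fst q \<inter> B, res (fst q) (fst q \<inter> B) (snd q))) ps"
  proof (rule map_cong[OF refl])
    fix q assume "q \<in> set ps"
    then have "fst q \<inter> (blk ps \<inter> B) = fst q \<inter> B" by blast
    then show "(fst q \<inter> (blk ps \<inter> B), res (fst q) (fst q \<inter> (blk ps \<inter> B)) (snd q)) =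
      (fst q \<inter> B, res (fst q) (fst q \<inter> B) (snd q))" by simp
  qed
  also have "blk ps \<inter> B = blk (map (\<lambda>q. (fst q \<inter> B, res (fst q) (fst q \<inter> B) (snd q))) ps)"
    by auto
  finally show ?case by simp
qed

lemma res_RA: "finite I \<Longrightarrow> dj Ss \<Longrightarrow> \<Union>(set Ss) = I \<Longrightarrow> x \<in> H I \<Longrightarrow> B \<subseteq> I \<Longrightarrow>
  res I B (RA I Ss x) = RA I (map (\<lambda>C. C \<inter> B) Ss) x"
proof -
  assume a: "finite I" "dj Ss" "\<Union>(set Ss) = I" "x \<in> H I" "B \<subseteq> I"
  have w: "wf (map (\<lambda>C. (C, res I C x)) Ss)" using wf_RA a by simp
  have "res I B (RA I Ss x) = res (blk (map (\<lambda>C. (C, res I C x)) Ss)) B (P (map (\<lambda>C. (C, res I C x)) Ss))"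
    unfolding RA_def blk_map a(3) ..
  also have "\<dots> = P (map (\<lambda>p. (fst p \<inter> B, res (fst p) (fst p \<inter> B) (snd p))) (map (\<lambda>C. (C, res I C x)) Ss))"
    by (rule res_P[OF w]) (simp add: blk_map a)
  also have "\<dots> = P (map (\<lambda>C. (C \<inter> B, res I (C \<inter> B) x)) Ss)"
  proof -
    have "map (\<lambda>p. (fst p \<inter> B, res (fst p) (fst p \<inter> B) (snd p))) (map (\<lambda>C. (C, res I C x)) Ss)
        = map (\<lambda>C. (C \<inter> B, res I (C \<inter> B) x)) Ss"
    proof -
      have "\<forall>C\<in>set Ss. res C (C \<inter> B) (res I C x) = res I (C \<inter> B) x"
      proof
        fix C assume "C \<in> set Ss"
        then have "C \<subseteq> I" using a by blast
        then show "res C (C \<inter> B) (res I C x) = res I (C \<inter> B) x"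
          using res_res[of I "C \<inter> B" C x] a by auto
      qed
      then show ?thesis by (simp add: map_eq_conv)
    qed
    then show ?thesis by (rule arg_cong)
  qed
  also have "\<dots> = RA I (map (\<lambda>C. C \<inter> B) Ss) x"
    unfolding RA_def by (simp add: o_def)
  finally show ?thesis .
qed

lemma RA_res: "finite I \<Longrightarrow> J \<subseteq> I \<Longrightarrow> \<forall>C\<in>set Cs. C \<subseteq> J \<Longrightarrow> x \<in> H I \<Longrightarrow> RA J Cs (res I J x) = RA I Cs x"
  unfolding RA_def by (rule arg_cong[where f=P], rule map_cong[OF refl]) (simp add: res_res)

lemma blk_concat: "blk (concat (map qs Ts)) = (\<Union>T\<in>set Ts. blk (qs T))"
  by auto

lemma wf_concat: "dj Ts \<Longrightarrow> \<forall>T\<in>set Ts. wf (qs T) \<and> blk (qs T) = T \<Longrightarrow> wf (concat (map qs Ts))"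
proof (induction Ts)
  case Nil then show ?case by simp
next
  case (Cons T Ts)
  have "blk (concat (map qs Ts)) = \<Union>(set Ts)" using Cons.prems(2) by (auto simp: blk_concat)
  then show ?case using Cons by (auto simp: wf_append)
qed

lemma P_concat: "dj Ts \<Longrightarrow> \<forall>T\<in>set Ts. wf (qs T) \<and> blk (qs T) = T \<Longrightarrow>
  P (map (\<lambda>T. (T, P (qs T))) Ts) = P (concat (map qs Ts))"
proof (induction Ts)
  case Nil then show ?case by simp
next
  case (Cons T Ts)
  have b: "blk (concat (map qs Ts)) = \<Union>(set Ts)" using Cons.prems(2) by (auto simp: blk_concat)
  have w: "wf (concat (map qs (T # Ts)))" by (rule wf_concat[OF Cons.prems])
  have IH: "P (map (\<lambda>T. (T, P (qs T))) Ts) = P (concat (map qs Ts))" using Cons by simp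
  have "P (map (\<lambda>T. (T, P (qs T))) (T # Ts)) = m T (\<Union>(set Ts)) (P (qs T)) (P (map (\<lambda>T. (T, P (qs T))) Ts))"
    by (simp add: image_image)
  also have "\<dots> = m (blk (qs T)) (blk (concat (map qs Ts))) (P (qs T)) (P (concat (map qs Ts)))"
    using IH b Cons.prems(2) by simp
  also have "\<dots> = P (qs T @ concat (map qs Ts))"
    using w by (intro P_append[symmetric]) simp
  finally show ?case by simp
qed

lemma meet: "finite I \<Longrightarrow> dj Ss \<Longrightarrow> dj Ts \<Longrightarrow> \<Union>(set Ss) = I \<Longrightarrow> \<Union>(set Ts) = I \<Longrightarrow> x \<in> H I \<Longrightarrow>
  RA I Ts (RA I Ss x) = RA I (concat (map (\<lambda>T. map (\<lambda>B. B \<inter> T) Ss) Ts)) x"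
proof -
  assume a: "finite I" "dj Ss" "dj Ts" "\<Union>(set Ss) = I" "\<Union>(set Ts) = I" "x \<in> H I"
  define qs where "qs T = map (\<lambda>C. (C, res I C x)) (map (\<lambda>B. B \<inter> T) Ss)" for T
  have "RA I Ts (RA I Ss x) = P (map (\<lambda>T. (T, P (qs T))) Ts)"
    unfolding RA_def[of I Ts]
  proof (rule arg_cong[where f=P], rule map_cong[OF refl])
    fix T assume "T \<in> set Ts"
    then have "T \<subseteq> I" using a by blast
    then have "res I T (RA I Ss x) = RA I (map (\<lambda>C. C \<inter> T) Ss) x" using res_RA a by blast
    then show "(T, res I T (RA I Ss x)) = (T, P (qs T))" unfolding qs_def RA_def by simp
  qed
  also have "\<dots> = P (concat (map qs Ts))"
  proof (rule P_concat[OF a(3)], rule ballI)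
    fix T assume "T \<in> set Ts"
    then have "T \<subseteq> I" using a by blast
    have "wf (qs T)" unfolding qs_def
      by (rule wf_RA) (use a dj_map_Int in auto)
    moreover have "blk (qs T) = T" unfolding qs_def blk_map using \<open>T \<subseteq> I\<close> a(4) by auto
    ultimately show "wf (qs T) \<and> blk (qs T) = T" by simp
  qed
  also have "concat (map qs Ts) = map (\<lambda>C. (C, res I C x)) (concat (map (\<lambda>T. map (\<lambda>B. B \<inter> T) Ss) Ts))"
    unfolding qs_def by (simp add: map_concat o_def)
  finally show ?thesis unfolding RA_def .
qed

lemma RA_fix_aux: "finite I \<Longrightarrow> dj Ss \<Longrightarrow> \<Union>(set Ss) \<subseteq> I \<Longrightarrow> x \<in> H I \<Longrightarrow> B \<in> set Ss \<Longrightarrow>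
  RA I (map (\<lambda>C. C \<inter> B) Ss) x = res I B x"
proof (induction Ss)
  case Nil then show ?case by simp
next
  case (Cons C Ss)
  have w: "wf (map (\<lambda>D. (D, res I D x)) (map (\<lambda>C. C \<inter> B) (C # Ss)))"
    by (rule wf_RA) (use Cons.prems dj_map_Int in auto)
  show ?case
  proof (cases "C = B")
    case True
    have e: "\<forall>D\<in>set Ss. D \<inter> B = {}" using Cons.prems True by auto
    have w2: "wf (map (\<lambda>D. (D, res I D x)) (map (\<lambda>C. C \<inter> B) Ss))" using w by (simp add: wf_Cons)
    have "P (map (\<lambda>D. (D, res I D x)) (map (\<lambda>C. C \<inter> B) Ss)) = one"
      by (rule P_all_empty[OF w2]) (use e in auto)
    moreover have "blk (map (\<lambda>D. (D, res I D x)) (map (\<lambda>C. C \<inter> B) Ss)) = {}" using e by auto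
    moreover have "B \<subseteq> I" using Cons.prems True by auto
    ultimately show ?thesis unfolding RA_def using True m_unitr[of B "res I B x"] res_in[of I B x] Cons.prems
      finite_subset[of B I] by (simp add: o_def)
  next
    case False
    then have "B \<in> set Ss" using Cons.prems by simp
    then have e: "C \<inter> B = {}" using Cons.prems(2) by auto
    define L where "L = map (\<lambda>D. (D, res I D x)) (map (\<lambda>C. C \<inter> B) Ss)"
    have "RA I (map (\<lambda>C. C \<inter> B) (C # Ss)) x = P ((C \<inter> B, res I (C \<inter> B) x) # L)"
      unfolding RA_def L_def by (simp only: list.map)
    also have "\<dots> = P L"
      by (rule P_empty_head) (use w e in \<open>simp_all add: L_def\<close>)
    also have "\<dots> = RA I (map (\<lambda>C. C \<inter> B) Ss) x" unfolding RA_def L_def ..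
    finally have "RA I (map (\<lambda>C. C \<inter> B) (C # Ss)) x = RA I (map (\<lambda>C. C \<inter> B) Ss) x" .
    then show ?thesis using Cons \<open>B \<in> set Ss\<close> by simp
  qed
qed

lemma RA_fix: "finite I \<Longrightarrow> dj Ss \<Longrightarrow> \<Union>(set Ss) = I \<Longrightarrow> x \<in> H I \<Longrightarrow> B \<in> set Ss \<Longrightarrow>
  res I B (RA I Ss x) = res I B x"
  using res_RA[of I Ss x B] RA_fix_aux[of I Ss x B] by auto

lemma RA_filter: "finite I \<Longrightarrow> dj Ss \<Longrightarrow> \<Union>(set Ss) \<subseteq> I \<Longrightarrow> x \<in> H I \<Longrightarrow>
  RA I (filter (\<lambda>C. C \<noteq> {}) Ss) x = RA I Ss x"
proof -
  assume a: "finite I" "dj Ss" "\<Union>(set Ss) \<subseteq> I" "x \<in> H I"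
  have "filter (\<lambda>p. fst p \<noteq> {}) (map (\<lambda>C. (C, res I C x)) Ss) = map (\<lambda>C. (C, res I C x)) (filter (\<lambda>C. C \<noteq> {}) Ss)"
    by (simp add: filter_map o_def)
  then show ?thesis unfolding RA_def using P_filter[OF wf_RA[OF a]] by simp
qed

lemma RA_single: "finite I \<Longrightarrow> x \<in> H I \<Longrightarrow> RA I [I] x = x"
  unfolding RA_def by (simp add: res_id m_unitr)

lemma reass_RA: "Ss \<noteq> [] \<Longrightarrow> dj Ss \<Longrightarrow> finite (\<Union>(set Ss)) \<Longrightarrow> x \<in> H (\<Union>(set Ss)) \<Longrightarrow>
   reassemble m cop Ss x = RA (\<Union>(set Ss)) Ss x"
proof (induction Ss arbitrary: x)
  case Nil then show ?case by simp
next
  case (Cons S Ss)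
  show ?case
  proof (cases Ss)
    case Nil
    then show ?thesis using RA_single Cons.prems by simp
  next
    case (Cons S' Ss')
    define R where "R = \<Union>(set Ss)"
    define I where "I = S \<union> R"
    have I: "\<Union>(set (S # Ss)) = I" unfolding I_def R_def by simp
    have fI: "finite I" using Cons.prems(3) unfolding I .
    have fS: "finite S" "finite R" using fI unfolding I_def by simp_all
    have d: "S \<inter> R = {}" using Cons.prems(2) unfolding R_def by simp
    have x: "x \<in> H (S \<union> R)" using Cons.prems I unfolding I_def by simp
    have cr: "cop S R x = (res I S x, res I R x)" unfolding I_def by (rule cop_res[OF fS d x])
    have rR: "res I R x \<in> H R" using res_in[of I R x] fI x unfolding I_def by simp
    have IH: "reassemble m cop Ss (res I R x) = RA R Ss (res I R x)"
      using \<open>Ss = S' # Ss'\<close> Cons.IH[of "res I R x"] Cons.prems rR fS unfolding R_def by simp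
    have "reassemble m cop (S # Ss) x = m S R (res I S x) (reassemble m cop Ss (res I R x))"
      using \<open>Ss = S' # Ss'\<close> cr unfolding R_def by (simp add: Let_def)
    also have "\<dots> = m S R (res I S x) (RA I Ss x)"
    proof -
      have c: "\<forall>C\<in>set Ss. C \<subseteq> R" unfolding R_def by blast
      have "R \<subseteq> I" unfolding I_def by blast
      have xI: "x \<in> H I" using x unfolding I_def .
      show ?thesis using IH RA_res[OF fI \<open>R \<subseteq> I\<close> c xI] by simp
    qed
    also have "\<dots> = RA I (S # Ss) x"
      unfolding RA_def R_def by (simp add: image_image)
    finally show ?thesis using I by simp
  qed
qed

definition rle :: "'a set \<Rightarrow> 'h \<Rightarrow> 'h \<Rightarrow> bool" where
  "rle I x y \<longleftrightarrow> x \<in> H I \<and> y \<in> H I \<and> (\<exists>Ss. dj Ss \<and> \<Union>(set Ss) = I \<and> y = RA I Ss x)"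

lemma reassembly_le_iff: "finite I \<Longrightarrow> reassembly_le H m cop I x y = rle I x y"
proof
  assume fI: "finite I" and r: "reassembly_le H m cop I x y"
  then obtain Ss where x: "x \<in> H I" and y: "y \<in> H I" and p: "is_set_partition I Ss" and ye: "y = reassemble m cop Ss x"
    unfolding reassembly_le_def by blast
  have pd: "\<Union>(set Ss) = I" "dj Ss" using p by (simp_all add: partition_dj)
  show "rle I x y"
  proof (cases "Ss = []")
    case True
    then have "I = {}" "y = x" using pd ye by auto
    then have "x = one" using x H_empty by simp
    then show ?thesis unfolding rle_def using x y True \<open>I = {}\<close> \<open>y = x\<close> by (intro conjI exI[of _ "[]"]) (simp_all add: RA_def)
  next
    case False
    then show ?thesis unfolding rle_def using x y pd ye reass_RA[of Ss x] fI by auto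
  qed
next
  assume fI: "finite I" and r: "rle I x y"
  then obtain Ss where x: "x \<in> H I" and y: "y \<in> H I" and d: "dj Ss" and u: "\<Union>(set Ss) = I" and ye: "y = RA I Ss x"
    unfolding rle_def by blast
  define Fs where "Fs = filter (\<lambda>C. C \<noteq> {}) Ss"
  have Fp: "is_set_partition I Fs" unfolding partition_dj Fs_def using u dj_filter[OF d] by auto
  have yF: "y = RA I Fs x" unfolding Fs_def using RA_filter[of I Ss x] fI d u x ye by simp
  show "reassembly_le H m cop I x y"
  proof (cases "Fs = []")
    case True
    then have "I = {}" using Fp by (simp add: partition_dj)
    then have "x = one" "y = one" using x y H_empty by auto
    then show ?thesis unfolding reassembly_le_def using x y Fp True by auto
  next
    case False
    have "\<Union>(set Fs) = I" "dj Fs" using Fp by (simp_all add: partition_dj)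
    then show ?thesis unfolding reassembly_le_def using x y Fp yF reass_RA[OF False] fI by auto
  qed
qed

lemma rle_refl: "finite I \<Longrightarrow> x \<in> H I \<Longrightarrow> rle I x x"
  unfolding rle_def using RA_single[of I x] by (intro conjI exI[of _ "[I]"]) auto

lemma rle_trans: "finite I \<Longrightarrow> rle I x y \<Longrightarrow> rle I y z \<Longrightarrow> rle I x z"
proof -
  assume fI: "finite I" and r1: "rle I x y" and r2: "rle I y z"
  obtain Ss where x: "x \<in> H I" and y: "y \<in> H I" and d: "dj Ss" and u: "\<Union>(set Ss) = I" and ye: "y = RA I Ss x"
    using r1 unfolding rle_def by blast
  obtain Ts where z: "z \<in> H I" and d2: "dj Ts" and u2: "\<Union>(set Ts) = I" and ze: "z = RA I Ts y"
    using r2 unfolding rle_def by blast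
  have "z = RA I (concat (map (\<lambda>T. map (\<lambda>B. B \<inter> T) Ss) Ts)) x"
    using meet[OF fI d d2 u u2 x] ye ze by simp
  moreover have "dj (concat (map (\<lambda>T. map (\<lambda>B. B \<inter> T) Ss) Ts))" by (rule dj_meet[OF d d2])
  moreover have "\<Union>(set (concat (map (\<lambda>T. map (\<lambda>B. B \<inter> T) Ss) Ts))) = I" unfolding Un_meet u u2 by simp
  ultimately show ?thesis unfolding rle_def using x z by blast
qed

lemma mset_concat_Cons: "mset (concat (map (\<lambda>b. g b # h b) bs)) = mset (map g bs) + mset (concat (map h bs))"
  by (induction bs) auto

lemma mset_swap: "mset (concat (map (\<lambda>t. map (\<lambda>b. f b t) bs) ts)) = mset (concat (map (\<lambda>b. map (\<lambda>t. f b t) ts) bs))"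
proof (induction ts)
  case Nil then show ?case by (induction bs) auto
next
  case (Cons t ts)
  then show ?case using mset_concat_Cons[of "\<lambda>b. f b t" "\<lambda>b. map (\<lambda>t. f b t) ts" bs] by simp
qed

lemma rle_antisym: "finite I \<Longrightarrow> rle I x y \<Longrightarrow> rle I y x \<Longrightarrow> x = y"
proof -
  assume fI: "finite I" and r1: "rle I x y" and r2: "rle I y x"
  obtain Ss where x: "x \<in> H I" and y: "y \<in> H I" and d: "dj Ss" and u: "\<Union>(set Ss) = I" and ye: "y = RA I Ss x"
    using r1 unfolding rle_def by blast
  obtain Ts where d2: "dj Ts" and u2: "\<Union>(set Ts) = I" and xe: "x = RA I Ts y"
    using r2 unfolding rle_def by blast
  have fix1: "RA I Ss y = y"
  proof -
    have "RA I Ss y = P (map (\<lambda>B. (B, res I B y)) Ss)" unfolding RA_def ..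
    also have "map (\<lambda>B. (B, res I B y)) Ss = map (\<lambda>B. (B, res I B x)) Ss"
    proof (rule map_cong[OF refl])
      fix B assume "B \<in> set Ss"
      then show "(B, res I B y) = (B, res I B x)" using RA_fix[OF fI d u x] ye by simp
    qed
    finally show ?thesis using ye unfolding RA_def by simp
  qed
  define M1 where "M1 = concat (map (\<lambda>T. map (\<lambda>B. B \<inter> T) Ss) Ts)"
  define M2 where "M2 = concat (map (\<lambda>S. map (\<lambda>B. B \<inter> S) Ts) Ss)"
  have xM: "x = RA I M1 y" using xe fix1 meet[OF fI d d2 u u2 y] unfolding M1_def by simp
  have yM: "y = RA I M2 y"
  proof -
    have "y = RA I Ss (RA I Ts y)" using ye xe by simp
    then show ?thesis using meet[OF fI d2 d u2 u y] unfolding M2_def by simp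
  qed
  have "(\<lambda>S. map (\<lambda>B. B \<inter> S) Ts) = (\<lambda>S. map (\<lambda>B. S \<inter> B) Ts)"
    by (intro ext map_cong refl) blast
  then have M2': "M2 = concat (map (\<lambda>S. map (\<lambda>B. S \<inter> B) Ts) Ss)" unfolding M2_def by simp
  have ms: "mset M1 = mset M2" unfolding M1_def M2' by (rule mset_swap)
  have dM1: "dj M1" unfolding M1_def by (rule dj_meet[OF d d2])
  have dM2: "dj M2" unfolding M2_def by (rule dj_meet[OF d2 d])
  have uM1: "\<Union>(set M1) \<subseteq> I" unfolding M1_def using u by auto
  have uM2: "\<Union>(set M2) \<subseteq> I" unfolding M2_def using u2 by auto
  have "RA I M1 y = RA I M2 y" unfolding RA_def
    by (rule P_perm) (use ms wf_RA[OF fI dM1 uM1 y] wf_RA[OF fI dM2 uM2 y] in auto)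
  then show ?thesis using xM yM by simp
qed

lemma rle_po: "finite I \<Longrightarrow> partial_order_on (H I) {(x, y). x \<in> H I \<and> y \<in> H I \<and> rle I x y}"
  unfolding partial_order_on_def preorder_on_def
proof (intro conjI)
  assume fI: "finite I"
  show "{(x, y). x \<in> H I \<and> y \<in> H I \<and> rle I x y} \<subseteq> H I \<times> H I" by auto
  show "refl_on (H I) {(x, y). x \<in> H I \<and> y \<in> H I \<and> rle I x y}"
  proof (rule refl_onI)
    fix x assume "x \<in> H I"
    then show "(x, x) \<in> {(x, y). x \<in> H I \<and> y \<in> H I \<and> rle I x y}" using rle_refl[OF fI] by simp
  qed
  show "trans {(x, y). x \<in> H I \<and> y \<in> H I \<and> rle I x y}"
  proof (rule transI)
    fix x y z assume "(x, y) \<in> {(x, y). x \<in> H I \<and> y \<in> H I \<and> rle I x y}"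
      "(y, z) \<in> {(x, y). x \<in> H I \<and> y \<in> H I \<and> rle I x y}"
    then show "(x, z) \<in> {(x, y). x \<in> H I \<and> y \<in> H I \<and> rle I x y}"
      using rle_trans[OF fI, of x y z] by simp
  qed
  show "antisym {(x, y). x \<in> H I \<and> y \<in> H I \<and> rle I x y}"
  proof (rule antisymI)
    fix x y assume "(x, y) \<in> {(x, y). x \<in> H I \<and> y \<in> H I \<and> rle I x y}"
      "(y, x) \<in> {(x, y). x \<in> H I \<and> y \<in> H I \<and> rle I x y}"
    then show "x = y" using rle_antisym[OF fI, of x y] by simp
  qed
qed

lemma rel_in: "finite I \<Longrightarrow> inj_on f I \<Longrightarrow> x \<in> H I \<Longrightarrow> rel f I x \<in> H (f ` I)"
  using rel_bij bij_betwE by blast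

lemma rel_res: "finite I \<Longrightarrow> inj_on f I \<Longrightarrow> B \<subseteq> I \<Longrightarrow> x \<in> H I \<Longrightarrow>
  rel f B (res I B x) = res (f ` I) (f ` B) (rel f I x)"
proof -
  assume a: "finite I" "inj_on f I" "B \<subseteq> I" "x \<in> H I"
  have e: "B \<union> (I - B) = I" using a by blast
  have fB: "finite B" "finite (I - B)" using a finite_subset by auto
  have d: "B \<inter> (I - B) = {}" by blast
  have x: "x \<in> H (B \<union> (I - B))" using a e by simp
  have i: "inj_on f (B \<union> (I - B))" using a e by simp
  have "cop (f ` B) (f ` (I - B)) (rel f (B \<union> (I - B)) x) = map_prod (rel f B) (rel f (I - B)) (cop B (I - B) x)"
    by (rule cop_nat[OF fB d i x])
  moreover have "f ` (I - B) = f ` I - f ` B" using a by (intro inj_on_image_set_diff) auto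
  ultimately show ?thesis unfolding res_def e by (metis fst_map_prod)
qed

lemma rel_P: "wf ps \<Longrightarrow> inj_on f (blk ps) \<Longrightarrow>
  rel f (blk ps) (P ps) = P (map (\<lambda>p. (f ` fst p, rel f (fst p) (snd p))) ps)"
proof (induction ps)
  case Nil
  have "rel f {} one \<in> H {}" using rel_in[of "{}" f one] H_empty by simp
  then show ?case using H_empty by simp
next
  case (Cons p ps)
  have w: "fst p \<inter> blk ps = {}" "finite (fst p)" "snd p \<in> H (fst p)" "wf ps"
    using Cons.prems(1) by (simp_all add: wf_Cons)
  have i: "inj_on f (fst p \<union> blk ps)" using Cons.prems(2) by simp
  have i2: "inj_on f (blk ps)" using i inj_on_subset by blast
  have "rel f (blk (p # ps)) (P (p # ps)) = rel f (fst p \<union> blk ps) (m (fst p) (blk ps) (snd p) (P ps))" by simp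
  also have "\<dots> = m (f ` fst p) (f ` blk ps) (rel f (fst p) (snd p)) (rel f (blk ps) (P ps))"
    by (rule m_nat[symmetric, OF w(2) blk_finite[OF w(4)] w(1) i w(3) P_in[OF w(4)]])
  also have "\<dots> = m (f ` fst p) (f ` blk ps) (rel f (fst p) (snd p)) (P (map (\<lambda>p. (f ` fst p, rel f (fst p) (snd p))) ps))"
    using Cons.IH[OF w(4) i2] by simp
  also have "f ` blk ps = blk (map (\<lambda>p. (f ` fst p, rel f (fst p) (snd p))) ps)" by auto
  finally show ?case by simp
qed

lemma dj_image: "inj_on f (\<Union>(set Ss)) \<Longrightarrow> dj Ss \<Longrightarrow> dj (map (\<lambda>B. f ` B) Ss)"
proof (induction Ss)
  case Nil then show ?case by simp
next
  case (Cons B Ss)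
  have i: "inj_on f (B \<union> \<Union>(set Ss))" using Cons.prems by simp
  have "f ` (B \<inter> \<Union>(set Ss)) = f ` B \<inter> f ` \<Union>(set Ss)" by (rule inj_on_image_Int[OF i]) auto
  then have "f ` B \<inter> \<Union>(set (map (\<lambda>B. f ` B) Ss)) = {}" using Cons.prems by auto
  moreover have "dj (map (\<lambda>B. f ` B) Ss)" using Cons inj_on_subset[OF i] by auto
  ultimately show ?case by simp
qed

lemma rel_RA: "finite I \<Longrightarrow> inj_on f I \<Longrightarrow> dj Ss \<Longrightarrow> \<Union>(set Ss) = I \<Longrightarrow> x \<in> H I \<Longrightarrow>
  rel f I (RA I Ss x) = RA (f ` I) (map (\<lambda>B. f ` B) Ss) (rel f I x)"
proof -
  assume a: "finite I" "inj_on f I" "dj Ss" "\<Union>(set Ss) = I" "x \<in> H I"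
  have w: "wf (map (\<lambda>C. (C, res I C x)) Ss)" using wf_RA a by simp
  have "rel f I (RA I Ss x) = rel f (blk (map (\<lambda>C. (C, res I C x)) Ss)) (P (map (\<lambda>C. (C, res I C x)) Ss))"
    unfolding RA_def blk_map a(4) ..
  also have "\<dots> = P (map (\<lambda>p. (f ` fst p, rel f (fst p) (snd p))) (map (\<lambda>C. (C, res I C x)) Ss))"
    by (rule rel_P[OF w]) (simp add: blk_map a)
  also have "map (\<lambda>p. (f ` fst p, rel f (fst p) (snd p))) (map (\<lambda>C. (C, res I C x)) Ss)
      = map (\<lambda>C. (C, res (f ` I) C (rel f I x))) (map (\<lambda>B. f ` B) Ss)"
  proof -
    have "\<forall>C\<in>set Ss. rel f C (res I C x) = res (f ` I) (f ` C) (rel f I x)"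
    proof
      fix C assume "C \<in> set Ss"
      then have "C \<subseteq> I" using a by blast
      then show "rel f C (res I C x) = res (f ` I) (f ` C) (rel f I x)" using rel_res a by blast
    qed
    then show ?thesis by (simp add: map_eq_conv)
  qed
  finally show ?thesis unfolding RA_def .
qed

lemma rle_rel: "finite I \<Longrightarrow> inj_on f I \<Longrightarrow> rle I x x' \<Longrightarrow> rle (f ` I) (rel f I x) (rel f I x')"
proof -
  assume fI: "finite I" and i: "inj_on f I" and r: "rle I x x'"
  obtain Ss where x: "x \<in> H I" and x': "x' \<in> H I" and d: "dj Ss" and u: "\<Union>(set Ss) = I" and e: "x' = RA I Ss x"
    using r unfolding rle_def by blast
  have "rel f I x' = RA (f ` I) (map (\<lambda>B. f ` B) Ss) (rel f I x)" using rel_RA[OF fI i d u x] e by simp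
  moreover have "dj (map (\<lambda>B. f ` B) Ss)" using dj_image[of f Ss] i u d by simp
  moreover have "\<Union>(set (map (\<lambda>B. f ` B) Ss)) = f ` I" using u by auto
  ultimately show ?thesis unfolding rle_def using rel_in[OF fI i x] rel_in[OF fI i x'] by blast
qed

lemma rle_res: "finite I \<Longrightarrow> A \<subseteq> I \<Longrightarrow> rle I x x' \<Longrightarrow> rle A (res I A x) (res I A x')"
proof -
  assume fI: "finite I" and A: "A \<subseteq> I" and r: "rle I x x'"
  obtain Ss where x: "x \<in> H I" and x': "x' \<in> H I" and d: "dj Ss" and u: "\<Union>(set Ss) = I" and e: "x' = RA I Ss x"
    using r unfolding rle_def by blast
  have "res I A x' = RA I (map (\<lambda>C. C \<inter> A) Ss) x" using res_RA[OF fI d u x A] e by simp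
  also have "\<dots> = RA A (map (\<lambda>C. C \<inter> A) Ss) (res I A x)"
    by (rule RA_res[symmetric, OF fI A _ x]) auto
  finally have "res I A x' = RA A (map (\<lambda>C. C \<inter> A) Ss) (res I A x)" .
  moreover have "dj (map (\<lambda>C. C \<inter> A) Ss)" using dj_map_Int d by blast
  moreover have "\<Union>(set (map (\<lambda>C. C \<inter> A) Ss)) = A" using u A by auto
  ultimately show ?thesis unfolding rle_def using res_in[OF fI A x] res_in[OF fI A x'] by blast
qed

lemma res_m_left: "finite S \<Longrightarrow> finite T \<Longrightarrow> S \<inter> T = {} \<Longrightarrow> x \<in> H S \<Longrightarrow> y \<in> H T \<Longrightarrow> res (S \<union> T) S (m S T x y) = x"
proof -
  assume a: "finite S" "finite T" "S \<inter> T = {}" "x \<in> H S" "y \<in> H T"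
  have "res (S \<union> T) S (m S T x y) = m (S \<inter> S) (T \<inter> S) (res S (S \<inter> S) x) (res T (T \<inter> S) y)"
    by (rule res_m) (use a in auto)
  also have "\<dots> = m S {} (res S S x) (res T {} y)" using a by (simp add: Int_commute)
  also have "\<dots> = x" using a by (simp add: res_id res_empty m_unitr)
  finally show ?thesis .
qed

lemma res_m_right: "finite S \<Longrightarrow> finite T \<Longrightarrow> S \<inter> T = {} \<Longrightarrow> x \<in> H S \<Longrightarrow> y \<in> H T \<Longrightarrow> res (S \<union> T) T (m S T x y) = y"
proof -
  assume a: "finite S" "finite T" "S \<inter> T = {}" "x \<in> H S" "y \<in> H T"
  have "res (S \<union> T) T (m S T x y) = m (S \<inter> T) (T \<inter> T) (res S (S \<inter> T) x) (res T (T \<inter> T) y)"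
    by (rule res_m) (use a in auto)
  also have "\<dots> = m {} T (res S {} x) (res T T y)" using a by simp
  also have "\<dots> = y" using a by (simp add: res_id res_empty m_unitl)
  finally show ?thesis .
qed

lemma RA_append: "finite I \<Longrightarrow> dj (Ps @ Qs) \<Longrightarrow> \<Union>(set (Ps @ Qs)) \<subseteq> I \<Longrightarrow> x \<in> H I \<Longrightarrow>
  RA I (Ps @ Qs) x = m (\<Union>(set Ps)) (\<Union>(set Qs)) (RA I Ps x) (RA I Qs x)"
proof -
  assume a: "finite I" "dj (Ps @ Qs)" "\<Union>(set (Ps @ Qs)) \<subseteq> I" "x \<in> H I"
  have w: "wf (map (\<lambda>C. (C, res I C x)) Ps @ map (\<lambda>C. (C, res I C x)) Qs)"
    using wf_RA[OF a] by simp
  show ?thesis unfolding RA_def map_append P_append[OF w] blk_map ..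
qed

lemma rle_m: "finite S \<Longrightarrow> finite T \<Longrightarrow> S \<inter> T = {} \<Longrightarrow> rle S x x' \<Longrightarrow> rle T y y' \<Longrightarrow>
  rle (S \<union> T) (m S T x y) (m S T x' y')"
proof -
  assume fS: "finite S" and fT: "finite T" and d: "S \<inter> T = {}" and r1: "rle S x x'" and r2: "rle T y y'"
  obtain Ps where x: "x \<in> H S" and x': "x' \<in> H S" and dP: "dj Ps" and uP: "\<Union>(set Ps) = S" and e1: "x' = RA S Ps x"
    using r1 unfolding rle_def by blast
  obtain Qs where y: "y \<in> H T" and y': "y' \<in> H T" and dQ: "dj Qs" and uQ: "\<Union>(set Qs) = T" and e2: "y' = RA T Qs y"
    using r2 unfolding rle_def by blast
  define z where "z = m S T x y"
  have fU: "finite (S \<union> T)" using fS fT by simp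
  have z: "z \<in> H (S \<union> T)" unfolding z_def by (rule m_in[OF fS fT d x y])
  have dPQ: "dj (Ps @ Qs)" using dP dQ uP uQ d by (simp add: dj_append)
  have uPQ: "\<Union>(set (Ps @ Qs)) = S \<union> T" using uP uQ by simp
  have "RA (S \<union> T) (Ps @ Qs) z = m S T (RA (S \<union> T) Ps z) (RA (S \<union> T) Qs z)"
    using RA_append[OF fU dPQ _ z] uPQ uP uQ by simp
  also have "RA (S \<union> T) Ps z = RA S Ps (res (S \<union> T) S z)"
    by (rule RA_res[symmetric, OF fU _ _ z]) (use uP in auto)
  also have "res (S \<union> T) S z = x" unfolding z_def by (rule res_m_left[OF fS fT d x y])
  also have "RA (S \<union> T) Qs z = RA T Qs (res (S \<union> T) T z)"
    by (rule RA_res[symmetric, OF fU _ _ z]) (use uQ in auto)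
  also have "res (S \<union> T) T z = y" unfolding z_def by (rule res_m_right[OF fS fT d x y])
  finally have "m S T x' y' = RA (S \<union> T) (Ps @ Qs) z" using e1 e2 by simp
  then show ?thesis unfolding rle_def using z m_in[OF fS fT d x' y'] dPQ uPQ z_def by blast
qed

lemma galois: "finite S \<Longrightarrow> finite T \<Longrightarrow> S \<inter> T = {} \<Longrightarrow> x \<in> H (S \<union> T) \<Longrightarrow> y \<in> H S \<Longrightarrow> z \<in> H T \<Longrightarrow>
  (rle S (res (S \<union> T) S x) y \<and> rle T (res (S \<union> T) T x) z) = rle (S \<union> T) x (m S T y z)"
proof
  assume fS: "finite S" and fT: "finite T" and d: "S \<inter> T = {}" and x: "x \<in> H (S \<union> T)" and y: "y \<in> H S" and z: "z \<in> H T"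
  assume "rle S (res (S \<union> T) S x) y \<and> rle T (res (S \<union> T) T x) z"
  then obtain Ps Qs where dP: "dj Ps" and uP: "\<Union>(set Ps) = S" and e1: "y = RA S Ps (res (S \<union> T) S x)"
    and dQ: "dj Qs" and uQ: "\<Union>(set Qs) = T" and e2: "z = RA T Qs (res (S \<union> T) T x)"
    unfolding rle_def by blast
  have fU: "finite (S \<union> T)" using fS fT by simp
  have dPQ: "dj (Ps @ Qs)" using dP dQ uP uQ d by (simp add: dj_append)
  have uPQ: "\<Union>(set (Ps @ Qs)) = S \<union> T" using uP uQ by simp
  have "y = RA (S \<union> T) Ps x" using e1 RA_res[OF fU _ _ x, of S Ps] uP by auto
  moreover have "z = RA (S \<union> T) Qs x" using e2 RA_res[OF fU _ _ x, of T Qs] uQ by auto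
  ultimately have "m S T y z = RA (S \<union> T) (Ps @ Qs) x"
    using RA_append[OF fU dPQ _ x] uPQ uP uQ by simp
  then show "rle (S \<union> T) x (m S T y z)" unfolding rle_def using x m_in[OF fS fT d y z] dPQ uPQ by blast
next
  assume fS: "finite S" and fT: "finite T" and d: "S \<inter> T = {}" and x: "x \<in> H (S \<union> T)" and y: "y \<in> H S" and z: "z \<in> H T"
  assume r: "rle (S \<union> T) x (m S T y z)"
  have fU: "finite (S \<union> T)" using fS fT by simp
  have "rle S (res (S \<union> T) S x) (res (S \<union> T) S (m S T y z))" by (rule rle_res[OF fU _ r]) auto
  moreover have "rle T (res (S \<union> T) T x) (res (S \<union> T) T (m S T y z))" by (rule rle_res[OF fU _ r]) auto
  ultimately show "rle S (res (S \<union> T) S x) y \<and> rle T (res (S \<union> T) T x) z"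
    using res_m_left[OF fS fT d y z] res_m_right[OF fS fT d y z] by simp
qed

lemma main_loc: "poset_hopf_monoid H rel one m cop (reassembly_le H m cop)
    \<and> (\<forall>S T. finite S \<longrightarrow> finite T \<longrightarrow> S \<inter> T = {} \<longrightarrow>
         (\<forall>x\<in>H (S \<union> T). \<forall>y\<in>H S. \<forall>z\<in>H T.
            (reassembly_le H m cop S (fst (cop S T x)) y \<and> reassembly_le H m cop T (snd (cop S T x)) z)
            \<longleftrightarrow> reassembly_le H m cop (S \<union> T) x (m S T y z)))"
proof (intro conjI allI impI ballI)
  show "poset_hopf_monoid H rel one m cop (reassembly_le H m cop)"
    unfolding poset_hopf_monoid_def
  proof (intro conjI allI impI ballI)
    show "set_hopf_monoid H rel one m cop" by (rule hm)
  next
    fix I :: "'a set" assume fI: "finite I"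
    show "partial_order_on (H I) {(x, y). x \<in> H I \<and> y \<in> H I \<and> reassembly_le H m cop I x y}"
      using rle_po[OF fI] reassembly_le_iff[OF fI] by simp
  next
    fix I :: "'a set" and f :: "'a \<Rightarrow> 'a" and x x' assume fI: "finite I" and i: "inj_on f I" and "x \<in> H I" "x' \<in> H I"
      and r: "reassembly_le H m cop I x x'"
    have fI': "finite (f ` I)" using fI by simp
    show "reassembly_le H m cop (f ` I) (rel f I x) (rel f I x')"
      using rle_rel[OF fI i] r reassembly_le_iff[OF fI] reassembly_le_iff[OF fI'] by simp
  next
    fix S T x x' y y' assume fS: "finite S" and fT: "finite T" and d: "S \<inter> T = {}"
      and "x \<in> H S" "x' \<in> H S" "y \<in> H T" "y' \<in> H T"
      and r1: "reassembly_le H m cop S x x'" and r2: "reassembly_le H m cop T y y'"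
    have fU: "finite (S \<union> T)" using fS fT by simp
    show "reassembly_le H m cop (S \<union> T) (m S T x y) (m S T x' y')"
      using rle_m[OF fS fT d] r1 r2 reassembly_le_iff[OF fS] reassembly_le_iff[OF fT] reassembly_le_iff[OF fU] by simp
  next
    fix S T x x' assume fS: "finite S" and fT: "finite T" and d: "S \<inter> T = {}"
      and x: "x \<in> H (S \<union> T)" and x': "x' \<in> H (S \<union> T)" and r: "reassembly_le H m cop (S \<union> T) x x'"
    have fU: "finite (S \<union> T)" using fS fT by simp
    have r': "rle (S \<union> T) x x'" using r reassembly_le_iff[OF fU] by simp
    have c1: "cop S T x = (res (S \<union> T) S x, res (S \<union> T) T x)" by (rule cop_res[OF fS fT d x])
    have c2: "cop S T x' = (res (S \<union> T) S x', res (S \<union> T) T x')" by (rule cop_res[OF fS fT d x'])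
    show "reassembly_le H m cop S (fst (cop S T x)) (fst (cop S T x'))"
      unfolding c1 c2 using rle_res[OF fU _ r', of S] reassembly_le_iff[OF fS] by simp
  next
    fix S T x x' assume fS: "finite S" and fT: "finite T" and d: "S \<inter> T = {}"
      and x: "x \<in> H (S \<union> T)" and x': "x' \<in> H (S \<union> T)" and r: "reassembly_le H m cop (S \<union> T) x x'"
    have fU: "finite (S \<union> T)" using fS fT by simp
    have r': "rle (S \<union> T) x x'" using r reassembly_le_iff[OF fU] by simp
    have c1: "cop S T x = (res (S \<union> T) S x, res (S \<union> T) T x)" by (rule cop_res[OF fS fT d x])
    have c2: "cop S T x' = (res (S \<union> T) S x', res (S \<union> T) T x')" by (rule cop_res[OF fS fT d x'])
    show "reassembly_le H m cop T (snd (cop S T x)) (snd (cop S T x'))"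
      unfolding c1 c2 using rle_res[OF fU _ r', of T] reassembly_le_iff[OF fT] by simp
  qed
next
  fix S T x y z assume fS: "finite S" and fT: "finite T" and d: "S \<inter> T = {}"
    and x: "x \<in> H (S \<union> T)" and y: "y \<in> H S" and z: "z \<in> H T"
  have fU: "finite (S \<union> T)" using fS fT by simp
  have c1: "cop S T x = (res (S \<union> T) S x, res (S \<union> T) T x)" by (rule cop_res[OF fS fT d x])
  show "(reassembly_le H m cop S (fst (cop S T x)) y \<and> reassembly_le H m cop T (snd (cop S T x)) z)
            \<longleftrightarrow> reassembly_le H m cop (S \<union> T) x (m S T y z)"
    unfolding c1 using galois[OF fS fT d x y z]
      reassembly_le_iff[OF fS] reassembly_le_iff[OF fT] reassembly_le_iff[OF fU] by simp
qed

end

theorem mainTheorem8: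
  fixes H :: "'a set \<Rightarrow> 'h set"
    and rel :: "('a \<Rightarrow> 'a) \<Rightarrow> 'a set \<Rightarrow> 'h \<Rightarrow> 'h"
    and one :: 'h
    and m :: "'a set \<Rightarrow> 'a set \<Rightarrow> 'h \<Rightarrow> 'h \<Rightarrow> 'h"
    and cop :: "'a set \<Rightarrow> 'a set \<Rightarrow> 'h \<Rightarrow> 'h \<times> 'h"
  assumes "set_hopf_monoid H rel one m cop"
    and "commutative_hm H m"
    and "cocommutative_hm H cop"
  shows "poset_hopf_monoid H rel one m cop (reassembly_le H m cop)
    \<and> (\<forall>S T. finite S \<longrightarrow> finite T \<longrightarrow> S \<inter> T = {} \<longrightarrow>
         (\<forall>x\<in>H (S \<union> T). \<forall>y\<in>H S. \<forall>z\<in>H T.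
            (reassembly_le H m cop S (fst (cop S T x)) y \<and> reassembly_le H m cop T (snd (cop S T x)) z)
            \<longleftrightarrow> reassembly_le H m cop (S \<union> T) x (m S T y z)))"
proof -
  interpret shm H rel one m cop by (rule shm.intro[OF assms])
  show ?thesis by (rule main_loc)
qed

end
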